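(* Let $(A,B)$ be a Katsura pair with $B\in M_N(\{0,1\})$. If the KEP-action $(G_B,E_A)$ is regular, then it is contracting. Moreover, $(G_B,E_A)$ is regular if and only if there is $K\in\mathbb{N}$ such that (i) for $\mu\in E^*_{A,\infty}$, $A_\mu=1$ implies $|\mu|\le K$; and (ii) for $\mu\in E^*_{A,<\infty}$, $|\mu|\ge K$ implies $A_{\mu[K,|\mu|]}=1$.
   Context: Katsura pair: $N\in\mathbb{N}$, $A\in M_N(\mathbb{N})$ (nonnegative integers), $B\in M_N(\mathbb{Z})$ with $A_{ij}=0\Rightarrow B_{ij}=0$. Graph $E_A$: vertices $\{1,\dots,N\}$, edges $e_{i,j,m}$ ($0\le m<A_{ij}$), $r=i$, $s=j$. Finite paths $\mu=\mu_1\cdots\mu_n$ with $s(\mu_i)=r(\mu_{i+1})$, $|\mu|=n$, $\mu[m,n]=\mu_m\cdots\mu_n$. For $\mu=e_{i_0,i_1,r_1}\cdots e_{i_{n-1},i_n,r_n}$, $A_\mu=\prod_tA_{i_ti_{t+1}}$, $B_\mu=\prod_tB_{i_ti_{t+1}}$; $B_e=B_{r(e)s(e)}$. The group bundle $\mathbb{Z}\times E_A^0$ (elements $a_i^k$) acts by $a_i^k\cdot e_{i,j,m}=e_{i,j,\hat m}$, $a_i^k|_{e_{i,j,m}}=a_j^{\hat k}$, $kB_{ij}+m=\hat kA_{ij}+\hat m$, $0\le\hat m<A_{ij}$, extended recursively to paths; $G_B$ is the faithful quotient, $(G_B,E_A)$ the KEP-action, $(G_B)_i$ the isotropy group at $i$.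 $E^0_{A,\infty}=\{i:(G_B)_i\text{ infinite}\}$, $E^0_{A,<\infty}$ its complement; $E_{A,\infty}$ is the subgraph with vertices $E^0_{A,\infty}$ and edges $\{e:s(e)\in E^0_{A,\infty},B_e\ne0\}$; $E_{A,<\infty}$ the subgraph with vertices $E^0_{A,<\infty}$ and edges $\{e:r(e)\in E^0_{A,<\infty},B_e\ne0\}$. Contracting: there is a finite $F\subseteq G_B$ such that for every $g$ there is $n$ with $g|_\mu\in F$ for all $\mu\in d(g)E^k$, $k\ge n$. Regular: for every $g$ there is $K$ such that $g\cdot\mu=\mu$ and $|\mu|\ge K$ imply $g|_\mu$ is the unit at $s(\mu)$. *)

theory Defs
  imports Main
begin

text \<open>Matrices are functions indexed by vertices 1..N.  An edge e_{i,j,m} of E_A is the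
triple (i,j,m); its range is i and its source is j.  Elements a_i^k of the group
bundle Z x E_A^0 are pairs (k,i).\<close>

type_synonym edge = "nat \<times> nat \<times> nat"

definition katsura_pair :: "nat \<Rightarrow> (nat \<Rightarrow> nat \<Rightarrow> nat) \<Rightarrow> (nat \<Rightarrow> nat \<Rightarrow> int) \<Rightarrow> bool" where
  "katsura_pair N A B \<longleftrightarrow> (\<forall>i\<in>{1..N}. \<forall>j\<in>{1..N}. A i j = 0 \<longrightarrow> B i j = 0)"

definition edge_r :: "edge \<Rightarrow> nat" where "edge_r e = fst e"
definition edge_s :: "edge \<Rightarrow> nat" where "edge_s e = fst (snd e)"

definition is_edge :: "nat \<Rightarrow> (nat \<Rightarrow> nat \<Rightarrow> nat) \<Rightarrow> edge \<Rightarrow> bool" where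
  "is_edge N A e \<longleftrightarrow> (case e of (i, j, m) \<Rightarrow> i \<in> {1..N} \<and> j \<in> {1..N} \<and> m < A i j)"

text \<open>Finite paths of E_A with range i (i.e. the set i E_A^*), as edge lists;
the empty list at vertex i is the vertex i itself.\<close>
fun valid_path :: "nat \<Rightarrow> (nat \<Rightarrow> nat \<Rightarrow> nat) \<Rightarrow> nat \<Rightarrow> edge list \<Rightarrow> bool" where
  "valid_path N A i [] \<longleftrightarrow> i \<in> {1..N}"
| "valid_path N A i (e # \<mu>) \<longleftrightarrow> is_edge N A e \<and> edge_r e = i \<and> valid_path N A (edge_s e) \<mu>"

definition path_src :: "nat \<Rightarrow> edge list \<Rightarrow> nat" where
  "path_src i \<mu> = (if \<mu> = [] then i else edge_s (last \<mu>))"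

text \<open>A_mu and mu[m,n] = mu_m ... mu_n (1-based).\<close>
definition A_path :: "(nat \<Rightarrow> nat \<Rightarrow> nat) \<Rightarrow> edge list \<Rightarrow> nat" where
  "A_path A \<mu> = prod_list (map (\<lambda>e. A (edge_r e) (edge_s e)) \<mu>)"

definition path_seg :: "edge list \<Rightarrow> nat \<Rightarrow> nat \<Rightarrow> edge list" where
  "path_seg \<mu> m n = take (n + 1 - m) (drop (m - 1) \<mu>)"

text \<open>Action of a_i^k on an edge e_{i,j,m} and restriction:
 kB_ij + m = k' A_ij + m', 0 <= m' < A_ij.\<close>
definition edge_act :: "(nat \<Rightarrow> nat \<Rightarrow> nat) \<Rightarrow> (nat \<Rightarrow> nat \<Rightarrow> int) \<Rightarrow> int \<times> nat \<Rightarrow> edge \<Rightarrow> edge" where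
  "edge_act A B a e = (case e of (i, j, m) \<Rightarrow>
     (i, j, nat ((fst a * B i j + int m) mod int (A i j))))"

definition edge_res :: "(nat \<Rightarrow> nat \<Rightarrow> nat) \<Rightarrow> (nat \<Rightarrow> nat \<Rightarrow> int) \<Rightarrow> int \<times> nat \<Rightarrow> edge \<Rightarrow> int \<times> nat" where
  "edge_res A B a e = (case e of (i, j, m) \<Rightarrow>
     ((fst a * B i j + int m) div int (A i j), j))"

fun path_act :: "(nat \<Rightarrow> nat \<Rightarrow> nat) \<Rightarrow> (nat \<Rightarrow> nat \<Rightarrow> int) \<Rightarrow> int \<times> nat \<Rightarrow> edge list \<Rightarrow> edge list" where
  "path_act A B a [] = []"
| "path_act A B a (e # \<mu>) = edge_act A B a e # path_act A B (edge_res A B a e) \<mu>"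

fun path_res :: "(nat \<Rightarrow> nat \<Rightarrow> nat) \<Rightarrow> (nat \<Rightarrow> nat \<Rightarrow> int) \<Rightarrow> int \<times> nat \<Rightarrow> edge list \<Rightarrow> int \<times> nat" where
  "path_res A B a [] = a"
| "path_res A B a (e # \<mu>) = path_res A B (edge_res A B a e) \<mu>"

text \<open>Faithful quotient G_B: a_i^k and a_i^l are identified iff they act identically on i E_A^*.\<close>
definition gcls :: "nat \<Rightarrow> (nat \<Rightarrow> nat \<Rightarrow> nat) \<Rightarrow> (nat \<Rightarrow> nat \<Rightarrow> int) \<Rightarrow> int \<times> nat \<Rightarrow> (int \<times> nat) set" where
  "gcls N A B a = {b. snd b = snd a \<and>
      (\<forall>\<mu>. valid_path N A (snd a) \<mu> \<longrightarrow> path_act A B a \<mu> = path_act A B b \<mu>)}"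

definition G_B :: "nat \<Rightarrow> (nat \<Rightarrow> nat \<Rightarrow> nat) \<Rightarrow> (nat \<Rightarrow> nat \<Rightarrow> int) \<Rightarrow> (int \<times> nat) set set" where
  "G_B N A B = gcls N A B ` {a. snd a \<in> {1..N}}"

definition isotropy :: "nat \<Rightarrow> (nat \<Rightarrow> nat \<Rightarrow> nat) \<Rightarrow> (nat \<Rightarrow> nat \<Rightarrow> int) \<Rightarrow> nat \<Rightarrow> (int \<times> nat) set set" where
  "isotropy N A B i = {gcls N A B (k, i) | k. True}"

text \<open>Operations on G_B via a representative (well defined on classes).\<close>
definition grep :: "(int \<times> nat) set \<Rightarrow> int \<times> nat" where "grep g = (SOME a. a \<in> g)"
definition gdom :: "(int \<times> nat) set \<Rightarrow> nat" where "gdom g = snd (grep g)"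
definition gact :: "(nat \<Rightarrow> nat \<Rightarrow> nat) \<Rightarrow> (nat \<Rightarrow> nat \<Rightarrow> int) \<Rightarrow> (int \<times> nat) set \<Rightarrow> edge list \<Rightarrow> edge list" where
  "gact A B g \<mu> = path_act A B (grep g) \<mu>"
definition gres :: "nat \<Rightarrow> (nat \<Rightarrow> nat \<Rightarrow> nat) \<Rightarrow> (nat \<Rightarrow> nat \<Rightarrow> int) \<Rightarrow> (int \<times> nat) set \<Rightarrow> edge list \<Rightarrow> (int \<times> nat) set" where
  "gres N A B g \<mu> = gcls N A B (path_res A B (grep g) \<mu>)"
definition gunit :: "nat \<Rightarrow> (nat \<Rightarrow> nat \<Rightarrow> nat) \<Rightarrow> (nat \<Rightarrow> nat \<Rightarrow> int) \<Rightarrow> nat \<Rightarrow> (int \<times> nat) set" where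
  "gunit N A B i = gcls N A B (0, i)"

definition contracting :: "nat \<Rightarrow> (nat \<Rightarrow> nat \<Rightarrow> nat) \<Rightarrow> (nat \<Rightarrow> nat \<Rightarrow> int) \<Rightarrow> bool" where
  "contracting N A B \<longleftrightarrow> (\<exists>F. finite F \<and> F \<subseteq> G_B N A B \<and>
     (\<forall>g\<in>G_B N A B. \<exists>n. \<forall>k\<ge>n. \<forall>\<mu>. valid_path N A (gdom g) \<mu> \<and> length \<mu> = k
        \<longrightarrow> gres N A B g \<mu> \<in> F))"

definition regular :: "nat \<Rightarrow> (nat \<Rightarrow> nat \<Rightarrow> nat) \<Rightarrow> (nat \<Rightarrow> nat \<Rightarrow> int) \<Rightarrow> bool" where
  "regular N A B \<longleftrightarrow> (\<forall>g\<in>G_B N A B. \<exists>K. \<forall>\<mu>. valid_path N A (gdom g) \<mu> \<and>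
     gact A B g \<mu> = \<mu> \<and> length \<mu> \<ge> K \<longrightarrow> gres N A B g \<mu> = gunit N A B (path_src (gdom g) \<mu>))"

definition V_inf :: "nat \<Rightarrow> (nat \<Rightarrow> nat \<Rightarrow> nat) \<Rightarrow> (nat \<Rightarrow> nat \<Rightarrow> int) \<Rightarrow> nat set" where
  "V_inf N A B = {i\<in>{1..N}. infinite (isotropy N A B i)}"

definition V_fin :: "nat \<Rightarrow> (nat \<Rightarrow> nat \<Rightarrow> nat) \<Rightarrow> (nat \<Rightarrow> nat \<Rightarrow> int) \<Rightarrow> nat set" where
  "V_fin N A B = {1..N} - V_inf N A B"

definition subgraph_path :: "nat \<Rightarrow> (nat \<Rightarrow> nat \<Rightarrow> nat) \<Rightarrow> nat set \<Rightarrow> edge set \<Rightarrow> nat \<Rightarrow> edge list \<Rightarrow> bool" where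
  "subgraph_path N A V Ed i \<mu> \<longleftrightarrow> i \<in> V \<and> valid_path N A i \<mu> \<and> set \<mu> \<subseteq> Ed"

definition edges_inf :: "nat \<Rightarrow> (nat \<Rightarrow> nat \<Rightarrow> nat) \<Rightarrow> (nat \<Rightarrow> nat \<Rightarrow> int) \<Rightarrow> edge set" where
  "edges_inf N A B = {e. is_edge N A e \<and> edge_s e \<in> V_inf N A B \<and> B (edge_r e) (edge_s e) \<noteq> 0}"

definition edges_fin :: "nat \<Rightarrow> (nat \<Rightarrow> nat \<Rightarrow> nat) \<Rightarrow> (nat \<Rightarrow> nat \<Rightarrow> int) \<Rightarrow> edge set" where
  "edges_fin N A B = {e. is_edge N A e \<and> edge_r e \<in> V_fin N A B \<and> B (edge_r e) (edge_s e) \<noteq> 0}"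

end

theory Submission
  imports Defs
begin

locale kat =
  fixes N :: nat and A :: "nat \<Rightarrow> nat \<Rightarrow> nat" and B :: "nat \<Rightarrow> nat \<Rightarrow> int"
  assumes b01: "\<forall>i\<in>{1..N}. \<forall>j\<in>{1..N}. B i j \<in> {0, 1}"
begin

definition Bpath :: "nat \<Rightarrow> edge list \<Rightarrow> bool" where
  "Bpath i \<mu> \<longleftrightarrow> valid_path N A i \<mu> \<and> (\<forall>e\<in>set \<mu>. B (edge_r e) (edge_s e) \<noteq> 0)"

definition Div :: "nat \<Rightarrow> int \<Rightarrow> bool" where
  "Div i d \<longleftrightarrow> (\<forall>\<nu>. Bpath i \<nu> \<longrightarrow> int (A_path A \<nu>) dvd d)"

definition Bpref :: "edge list \<Rightarrow> edge list" where
  "Bpref \<mu> = takeWhile (\<lambda>e. B (edge_r e) (edge_s e) \<noteq> 0) \<mu>"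

lemma path_src_Cons: "path_src i (e # xs) = path_src (edge_s e) xs"
  by (simp add: path_src_def)

lemma path_src_append: "path_src i (xs @ ys) = path_src (path_src i xs) ys"
  by (induction xs arbitrary: i) (auto simp: path_src_def)

lemma valid_append: "valid_path N A i (xs @ ys) \<longleftrightarrow> valid_path N A i xs \<and> valid_path N A (path_src i xs) ys"
proof (induction xs arbitrary: i)
  case Nil
  then show ?case by (cases ys) (auto simp: path_src_def is_edge_def edge_r_def split: prod.splits)
next
  case (Cons e xs)
  then show ?case by (auto simp: path_src_Cons)
qed

lemma valid_vertex: "valid_path N A i \<mu> \<Longrightarrow> i \<in> {1..N}"
  by (cases \<mu>) (auto simp: is_edge_def edge_r_def split: prod.splits)

lemma valid_src: "valid_path N A i \<mu> \<Longrightarrow> path_src i \<mu> \<in> {1..N}"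
  by (induction \<mu> arbitrary: i) (auto simp: path_src_def is_edge_def edge_s_def split: prod.splits if_splits)

lemma valid_edge: "valid_path N A i \<mu> \<Longrightarrow> e \<in> set \<mu> \<Longrightarrow> is_edge N A e"
  by (induction \<mu> arbitrary: i) auto

lemma is_edge_A: "is_edge N A e \<Longrightarrow> A (edge_r e) (edge_s e) \<ge> 1"
  by (auto simp: is_edge_def edge_r_def edge_s_def split: prod.splits)

lemma A_path_append: "A_path A (xs @ ys) = A_path A xs * A_path A ys"
  by (simp add: A_path_def)

lemma A_path_Cons: "A_path A (e # xs) = A (edge_r e) (edge_s e) * A_path A xs"
  by (simp add: A_path_def)

lemma A_path_Nil[simp]: "A_path A [] = 1"
  by (simp add: A_path_def)

lemma A_path_pos: "valid_path N A i \<mu> \<Longrightarrow> A_path A \<mu> \<ge> 1"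
proof (induction \<mu> arbitrary: i)
  case Nil then show ?case by simp
next
  case (Cons e \<mu>)
  then have "A (edge_r e) (edge_s e) \<ge> 1" using is_edge_A by (meson valid_path.simps(2))
  moreover have "A_path A \<mu> \<ge> 1" using Cons by auto
  ultimately show ?case by (simp add: A_path_Cons)
qed

lemma A_path_eq1: "A_path A xs = 1 \<longleftrightarrow> (\<forall>e\<in>set xs. A (edge_r e) (edge_s e) = 1)"
  by (induction xs) (auto simp: A_path_Cons)

lemma Bpath_Cons: "Bpath i (e # \<mu>) \<longleftrightarrow> is_edge N A e \<and> edge_r e = i \<and> B (edge_r e) (edge_s e) \<noteq> 0 \<and> Bpath (edge_s e) \<mu>"
  by (auto simp: Bpath_def)

lemma Bpath_append: "Bpath i (xs @ ys) \<longleftrightarrow> Bpath i xs \<and> Bpath (path_src i xs) ys"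
  by (auto simp: Bpath_def valid_append)

lemma Div_diff: "Div i a \<Longrightarrow> Div i b \<Longrightarrow> Div i (a - b)"
  by (simp add: Div_def)
lemma Div_add: "Div i a \<Longrightarrow> Div i b \<Longrightarrow> Div i (a + b)"
  by (simp add: Div_def)
lemma Div_neg: "Div i a \<Longrightarrow> Div i (- a)"
  by (simp add: Div_def)
lemma Div_0[simp]: "Div i 0"
  by (simp add: Div_def)
lemma Div_mult: "Div i a \<Longrightarrow> Div i (a * c)"
  by (simp add: Div_def)

lemma edge_B: "is_edge N A e \<Longrightarrow> B (edge_r e) (edge_s e) = 0 \<or> B (edge_r e) (edge_s e) = 1"
  using b01 by (auto simp: is_edge_def edge_r_def edge_s_def split: prod.splits)

lemma Bpref_Bpath: "valid_path N A i \<mu> \<Longrightarrow> Bpath i (Bpref \<mu>)"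
proof -
  assume v: "valid_path N A i \<mu>"
  have "\<mu> = Bpref \<mu> @ dropWhile (\<lambda>e. B (edge_r e) (edge_s e) \<noteq> 0) \<mu>"
    by (simp add: Bpref_def)
  then have "valid_path N A i (Bpref \<mu>)" using v valid_append by metis
  then show ?thesis unfolding Bpath_def Bpref_def by (auto dest: set_takeWhileD)
qed

lemma Bpref_of_Bpath: "Bpath i \<mu> \<Longrightarrow> Bpref \<mu> = \<mu>"
  by (auto simp: Bpath_def Bpref_def)

lemma Div_Bpref: "Div i d \<Longrightarrow> valid_path N A i \<mu> \<Longrightarrow> int (A_path A (Bpref \<mu>)) dvd d"
  using Bpref_Bpath Div_def by blast

lemma div_diff_dvd:
  fixes k l m a :: int
  assumes "a dvd k - l" "a > 0"
  shows "(k + m) div a - (l + m) div a = (k - l) div a"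
proof -
  obtain q where q: "k - l = q * a" using assms(1) by (metis dvd_def mult.commute)
  have e: "k + m = (l + m) + q * a" using q by simp
  have "(k + m) div a = q + (l + m) div a" unfolding e using assms(2) by (simp only: div_mult_self1 less_irrefl)
  moreover have "(k - l) div a = q" using q assms(2) by simp
  ultimately show ?thesis by simp
qed

lemma dvd_mult_iff_aux:
  fixes a c d :: int
  assumes "a > 0"
  shows "(a dvd d \<and> c dvd d div a) \<longleftrightarrow> (a * c) dvd d"
proof
  assume h: "a dvd d \<and> c dvd d div a"
  then obtain q where "d = a * q" by (auto elim: dvdE)
  then show "(a * c) dvd d" using h assms by auto
next
  assume h: "(a * c) dvd d"
  then obtain q where q: "d = a * c * q" by (auto elim: dvdE)
  then show "a dvd d \<and> c dvd d div a" using assms by (simp add: mult.assoc)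
qed

lemma act_eq:
  "valid_path N A i \<mu> \<Longrightarrow>
   (path_act A B (k, x) \<mu> = path_act A B (l, y) \<mu> \<longleftrightarrow> int (A_path A (Bpref \<mu>)) dvd (k - l))"
proof (induction \<mu> arbitrary: i k l x y)
  case Nil
  then show ?case by (simp add: Bpref_def)
next
  case (Cons e \<mu>)
  obtain i' j m where e: "e = (i', j, m)" by (cases e) auto
  have ie: "is_edge N A e" and vm: "valid_path N A j \<mu>" and ii: "i' = i"
    using Cons.prems e by (auto simp: edge_s_def edge_r_def)
  have mA: "m < A i' j" and ij: "i' \<in> {1..N}" "j \<in> {1..N}" using ie e by (auto simp: is_edge_def)
  have apos: "int (A i' j) > 0" using mA by simp
  have "B i' j \<in> {0, 1}" using b01 ij by blast
  then have "B i' j = 0 \<or> B i' j = 1" by simp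
  then show ?case
  proof
    assume b0: "B i' j = 0"
    have "Bpref (e # \<mu>) = []" using b0 e by (simp add: Bpref_def edge_r_def edge_s_def)
    moreover have "edge_act A B (k, x) e = edge_act A B (l, y) e" using b0 e by (simp add: edge_act_def)
    moreover have "edge_res A B (k, x) e = edge_res A B (l, y) e" using b0 e by (simp add: edge_res_def)
    ultimately show ?thesis by simp
  next
    assume b1: "B i' j = 1"
    let ?a = "int (A i' j)"
    have bp: "Bpref (e # \<mu>) = e # Bpref \<mu>" using b1 e by (simp add: Bpref_def edge_r_def edge_s_def)
    have AP: "int (A_path A (Bpref (e # \<mu>))) = ?a * int (A_path A (Bpref \<mu>))"
      using bp e by (simp add: A_path_Cons edge_r_def edge_s_def)
    have ea: "edge_act A B (k, x) e = edge_act A B (l, y) e \<longleftrightarrow> ?a dvd (k - l)"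
    proof -
      have "edge_act A B (k, x) e = (i', j, nat ((k + int m) mod ?a))"
        "edge_act A B (l, y) e = (i', j, nat ((l + int m) mod ?a))"
        using b1 e by (simp_all add: edge_act_def)
      then have "edge_act A B (k, x) e = edge_act A B (l, y) e \<longleftrightarrow> (k + int m) mod ?a = (l + int m) mod ?a"
        using apos by (simp add: eq_nat_nat_iff)
      also have "\<dots> \<longleftrightarrow> ?a dvd (k - l)" by (simp add: mod_eq_dvd_iff)
      finally show ?thesis .
    qed
    have er: "edge_res A B (k, x) e = ((k + int m) div ?a, j)" "edge_res A B (l, y) e = ((l + int m) div ?a, j)"
      using b1 e by (auto simp: edge_res_def)
    have "path_act A B (k, x) (e # \<mu>) = path_act A B (l, y) (e # \<mu>) \<longleftrightarrow>
          ?a dvd (k - l) \<and> int (A_path A (Bpref \<mu>)) dvd ((k + int m) div ?a - (l + int m) div ?a)"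
      using ea er Cons.IH[OF vm] by simp
    also have "\<dots> \<longleftrightarrow> ?a dvd (k - l) \<and> int (A_path A (Bpref \<mu>)) dvd ((k - l) div ?a)"
      using div_diff_dvd apos by auto
    also have "\<dots> \<longleftrightarrow> int (A_path A (Bpref (e # \<mu>))) dvd (k - l)"
      using AP dvd_mult_iff_aux[OF apos] by simp
    finally show ?thesis .
  qed
qed

lemma act_zero: "valid_path N A i \<mu> \<Longrightarrow> path_act A B (0, x) \<mu> = \<mu>"
proof (induction \<mu> arbitrary: i x)
  case Nil then show ?case by simp
next
  case (Cons e \<mu>)
  obtain i' j m where e: "e = (i', j, m)" by (cases e) auto
  have mA: "m < A i' j" using Cons.prems e by (auto simp: is_edge_def)
  have "edge_act A B (0, x) e = e" using e mA by (simp add: edge_act_def)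
  moreover have "edge_res A B (0, x) e = (0, j)" using e mA by (simp add: edge_res_def)
  ultimately show ?case using Cons e by (auto simp: edge_s_def)
qed

lemma res_snd: "snd (path_res A B a \<mu>) = path_src (snd a) \<mu>"
proof (induction \<mu> arbitrary: a)
  case Nil then show ?case by (simp add: path_src_def)
next
  case (Cons e \<mu>)
  have "snd (edge_res A B a e) = edge_s e" by (auto simp: edge_res_def edge_s_def split: prod.splits)
  then show ?case using Cons by (simp add: path_src_Cons)
qed

lemma res_zero: "valid_path N A i \<mu> \<Longrightarrow> fst (path_res A B (0, x) \<mu>) = 0"
proof (induction \<mu> arbitrary: i x)
  case Nil then show ?case by simp
next
  case (Cons e \<mu>)
  obtain i' j m where e: "e = (i', j, m)" by (cases e) auto
  have mA: "m < A i' j" using Cons.prems e by (auto simp: is_edge_def)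
  have "edge_res A B (0, x) e = (0, j)" using e mA by (simp add: edge_res_def)
  then show ?case using Cons e by (auto simp: edge_s_def)
qed

lemma res_nonB: "valid_path N A i \<mu> \<Longrightarrow> Bpref \<mu> \<noteq> \<mu> \<Longrightarrow> fst (path_res A B (k, x) \<mu>) = 0"
proof (induction \<mu> arbitrary: i k x)
  case Nil then show ?case by (simp add: Bpref_def)
next
  case (Cons e \<mu>)
  obtain i' j m where e: "e = (i', j, m)" by (cases e) auto
  have mA: "m < A i' j" and vm: "valid_path N A j \<mu>" using Cons.prems e by (auto simp: is_edge_def edge_s_def)
  show ?case
  proof (cases "B i' j = 0")
    case True
    have "edge_res A B (k, x) e = (0, j)" using e mA True by (simp add: edge_res_def)
    then show ?thesis using res_zero[OF vm] by simp
  next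
    case False
    then have "Bpref \<mu> \<noteq> \<mu>" using Cons.prems(2) e by (simp add: Bpref_def edge_r_def edge_s_def)
    moreover obtain k' where "edge_res A B (k, x) e = (k', j)" using e by (simp add: edge_res_def)
    ultimately show ?thesis using Cons.IH[OF vm] by simp
  qed
qed

lemma res_dvd: "Bpath i \<mu> \<Longrightarrow> int (A_path A \<mu>) dvd k \<Longrightarrow> fst (path_res A B (k, x) \<mu>) = k div int (A_path A \<mu>)"
proof (induction \<mu> arbitrary: i k x)
  case Nil then show ?case by simp
next
  case (Cons e \<mu>)
  obtain i' j m where e: "e = (i', j, m)" by (cases e) auto
  have mA: "m < A i' j" and bm: "Bpath j \<mu>" and bn: "B i' j \<noteq> 0" and ij: "i' \<in> {1..N}" "j \<in> {1..N}"
    using Cons.prems e by (auto simp: is_edge_def edge_s_def edge_r_def Bpath_Cons)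
  have "B i' j \<in> {0, 1}" using b01 ij by blast
  then have b1: "B i' j = 1" using bn by simp
  let ?a = "int (A i' j)"
  have apos: "?a > 0" using mA by simp
  have AP: "int (A_path A (e # \<mu>)) = ?a * int (A_path A \<mu>)" using e by (simp add: A_path_Cons edge_r_def edge_s_def)
  have ad: "?a dvd k" using Cons.prems(2) unfolding AP by (rule dvd_mult_left)
  have "(k + int m) div ?a = k div ?a"
  proof -
    obtain q where q: "k = q * ?a" using ad by (metis dvd_def mult.commute)
    have "(int m + q * ?a) div ?a = q + int m div ?a" using apos by (simp only: div_mult_self1 less_irrefl)
    moreover have "int m div ?a = 0" using mA by (simp add: div_pos_pos_trivial)
    moreover have "k div ?a = q" using q apos by simp
    ultimately show ?thesis using q by (simp add: add.commute)
  qed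
  then have er: "edge_res A B (k, x) e = (k div ?a, j)" using e b1 by (simp add: edge_res_def)
  have "?a * int (A_path A \<mu>) dvd k" using Cons.prems(2) AP by simp
  then have d2: "int (A_path A \<mu>) dvd k div ?a" using dvd_mult_iff_aux[OF apos, where c="int (A_path A \<mu>)" and d=k] by blast
  have "fst (path_res A B (k, x) (e # \<mu>)) = (k div ?a) div int (A_path A \<mu>)"
    using er Cons.IH[OF bm d2] by simp
  also have "\<dots> = k div (?a * int (A_path A \<mu>))" by (rule zdiv_zmult2_eq[symmetric]) simp
  also have "\<dots> = k div int (A_path A (e # \<mu>))" using AP by simp
  finally show ?case .
qed

lemma res_welldef:
  "valid_path N A i \<mu> \<Longrightarrow> Div i (k - l) \<Longrightarrow>
   Div (path_src i \<mu>) (fst (path_res A B (k, x) \<mu>) - fst (path_res A B (l, y) \<mu>))"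
proof (induction \<mu> arbitrary: i k l x y)
  case Nil then show ?case by (simp add: path_src_def)
next
  case (Cons e \<mu>)
  obtain i' j m where e: "e = (i', j, m)" by (cases e) auto
  have mA: "m < A i' j" and vm: "valid_path N A j \<mu>" and ij: "i' \<in> {1..N}" "j \<in> {1..N}" and ii: "i' = i"
    and ie: "is_edge N A e"
    using Cons.prems e by (auto simp: is_edge_def edge_s_def edge_r_def)
  have ps: "path_src i (e # \<mu>) = path_src j \<mu>" using e by (simp add: path_src_Cons edge_s_def)
  have "B i' j \<in> {0, 1}" using b01 ij by blast
  then have "B i' j = 0 \<or> B i' j = 1" by simp
  then show ?case
  proof
    assume b0: "B i' j = 0"
    have "edge_res A B (k, x) e = (0, j)" "edge_res A B (l, y) e = (0, j)" using e mA b0 by (auto simp: edge_res_def)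
    then show ?thesis using ps by simp
  next
    assume b1: "B i' j = 1"
    let ?a = "int (A i' j)"
    have apos: "?a > 0" using mA by simp
    have er: "edge_res A B (k, x) e = ((k + int m) div ?a, j)" "edge_res A B (l, y) e = ((l + int m) div ?a, j)"
      using b1 e by (auto simp: edge_res_def)
    have be: "Bpath i [e]" using ie ii e b1 ij by (auto simp: Bpath_def edge_r_def edge_s_def)
    have "int (A_path A [e]) dvd k - l" using Cons.prems(2) be Div_def by blast
    then have ad: "?a dvd k - l" using e by (simp add: A_path_def edge_r_def edge_s_def)
    have "Div j ((k - l) div ?a)"
      unfolding Div_def
    proof (intro allI impI)
      fix \<nu> assume "Bpath j \<nu>"
      then have "Bpath i (e # \<nu>)" using ie ii e b1 by (auto simp: Bpath_Cons edge_r_def edge_s_def)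
      then have "int (A_path A (e # \<nu>)) dvd k - l" using Cons.prems(2) Div_def by blast
      then have "?a * int (A_path A \<nu>) dvd k - l" using e by (simp add: A_path_Cons edge_r_def edge_s_def)
      then show "int (A_path A \<nu>) dvd (k - l) div ?a" using dvd_mult_iff_aux[OF apos, where c="int (A_path A \<nu>)" and d="k - l"] by blast
    qed
    then have "Div j ((k + int m) div ?a - (l + int m) div ?a)" using div_diff_dvd[OF ad apos] by simp
    from Cons.IH[OF vm this] show ?thesis using er ps by simp
  qed
qed

lemma gcls_mem: "(l, y) \<in> gcls N A B (k, i) \<longleftrightarrow> y = i \<and> Div i (k - l)"
proof
  assume h: "(l, y) \<in> gcls N A B (k, i)"
  then have y: "y = i" and eq: "\<forall>\<mu>. valid_path N A i \<mu> \<longrightarrow> path_act A B (k, i) \<mu> = path_act A B (l, y) \<mu>"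
    by (auto simp: gcls_def)
  have "Div i (k - l)" unfolding Div_def
  proof (intro allI impI)
    fix \<nu> assume b: "Bpath i \<nu>"
    then have v: "valid_path N A i \<nu>" by (simp add: Bpath_def)
    then have "int (A_path A (Bpref \<nu>)) dvd k - l" using eq act_eq by blast
    then show "int (A_path A \<nu>) dvd k - l" using Bpref_of_Bpath[OF b] by simp
  qed
  then show "y = i \<and> Div i (k - l)" using y by simp
next
  assume h: "y = i \<and> Div i (k - l)"
  have "\<forall>\<mu>. valid_path N A i \<mu> \<longrightarrow> path_act A B (k, i) \<mu> = path_act A B (l, y) \<mu>"
    using h Div_Bpref act_eq by blast
  then show "(l, y) \<in> gcls N A B (k, i)" using h by (simp add: gcls_def)
qed

lemma gcls_eq: "gcls N A B (k, i) = gcls N A B (l, i) \<longleftrightarrow> Div i (k - l)"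
proof
  assume e: "gcls N A B (k, i) = gcls N A B (l, i)"
  have "(l, i) \<in> gcls N A B (l, i)" by (simp add: gcls_mem)
  then have "(l, i) \<in> gcls N A B (k, i)" using e by simp
  then show "Div i (k - l)" by (simp only: gcls_mem)
next
  assume h: "Div i (k - l)"
  show "gcls N A B (k, i) = gcls N A B (l, i)"
  proof (rule set_eqI)
    fix b :: "int \<times> nat"
    obtain m y where b: "b = (m, y)" by (cases b) auto
    have "Div i (k - m) \<longleftrightarrow> Div i (l - m)"
    proof
      assume "Div i (k - m)" then have "Div i ((k - m) - (k - l))" using h Div_diff by blast
      then show "Div i (l - m)" by simp
    next
      assume "Div i (l - m)" then have "Div i ((l - m) + (k - l))" using h Div_add by blast
      then show "Div i (k - m)" by simp
    qed
    then show "b \<in> gcls N A B (k, i) \<longleftrightarrow> b \<in> gcls N A B (l, i)" using b by (simp add: gcls_mem)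
  qed
qed

lemma res_pair: "path_res A B (k, i) \<mu> = (fst (path_res A B (k, i) \<mu>), path_src i \<mu>)"
  using res_snd[of "(k, i)" \<mu>] by (metis prod.collapse snd_conv)

lemma gcls_props:
  fixes k :: int and i :: nat
  assumes i: "i \<in> {1..N}"
  defines "g \<equiv> gcls N A B (k, i)"
  shows "g \<in> G_B N A B" "gdom g = i"
    "valid_path N A i \<mu> \<Longrightarrow> gact A B g \<mu> = path_act A B (k, i) \<mu>"
    "valid_path N A i \<mu> \<Longrightarrow> gres N A B g \<mu> = gcls N A B (fst (path_res A B (k, i) \<mu>), path_src i \<mu>)"
proof -
  show "g \<in> G_B N A B" using i by (auto simp: G_B_def g_def)
  have "(k, i) \<in> g" by (simp add: g_def gcls_mem)
  then have "grep g \<in> g" unfolding grep_def by (rule someI)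
  then obtain l where gl: "grep g = (l, i)" and dl: "Div i (k - l)"
    unfolding g_def by (metis gcls_mem prod.collapse)
  show "gdom g = i" by (simp add: gdom_def gl)
  show "valid_path N A i \<mu> \<Longrightarrow> gact A B g \<mu> = path_act A B (k, i) \<mu>"
  proof -
    assume v: "valid_path N A i \<mu>"
    have "int (A_path A (Bpref \<mu>)) dvd k - l" using Div_Bpref[OF dl v] .
    then have "path_act A B (k, i) \<mu> = path_act A B (l, i) \<mu>" using act_eq[OF v] by blast
    then show ?thesis by (simp add: gact_def gl)
  qed
  show "valid_path N A i \<mu> \<Longrightarrow> gres N A B g \<mu> = gcls N A B (fst (path_res A B (k, i) \<mu>), path_src i \<mu>)"
  proof -
    assume v: "valid_path N A i \<mu>"
    have "Div i (l - k)" using Div_neg[OF dl] by simp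
    then have "Div (path_src i \<mu>) (fst (path_res A B (l, i) \<mu>) - fst (path_res A B (k, i) \<mu>))"
      using res_welldef[OF v] by blast
    then have "gcls N A B (fst (path_res A B (l, i) \<mu>), path_src i \<mu>) = gcls N A B (fst (path_res A B (k, i) \<mu>), path_src i \<mu>)"
      using gcls_eq by blast
    then show ?thesis unfolding gres_def gl by (metis res_pair)
  qed
qed

lemma G_B_cases:
  assumes "g \<in> G_B N A B"
  obtains k i where "i \<in> {1..N}" "g = gcls N A B (k, i)"
  using assms unfolding G_B_def by (metis (mono_tags, lifting) imageE mem_Collect_eq prod.collapse)

lemma isotropy_range: "isotropy N A B i = range (\<lambda>k. gcls N A B (k, i))"
  by (auto simp: isotropy_def)

lemma V_inf_iff:
  assumes i: "i \<in> {1..N}"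
  shows "i \<in> V_inf N A B \<longleftrightarrow> (\<forall>d. Div i d \<longrightarrow> d = 0)"
proof
  assume inf: "i \<in> V_inf N A B"
  show "\<forall>d. Div i d \<longrightarrow> d = 0"
  proof (intro allI impI, rule ccontr)
    fix d assume dd: "Div i d" and d0: "d \<noteq> 0"
    have dabs: "Div i \<bar>d\<bar>" using dd Div_neg by (cases "d \<ge> 0") auto
    have "isotropy N A B i \<subseteq> (\<lambda>k. gcls N A B (k, i)) ` {0..<\<bar>d\<bar>}"
    proof
      fix g assume "g \<in> isotropy N A B i"
      then obtain k where g: "g = gcls N A B (k, i)" by (auto simp: isotropy_def)
      have "k - k mod \<bar>d\<bar> = \<bar>d\<bar> * (k div \<bar>d\<bar>)" by (simp add: minus_mod_eq_mult_div)
      then have "Div i (k - k mod \<bar>d\<bar>)" using Div_mult[OF dabs] by simp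
      then have "g = gcls N A B (k mod \<bar>d\<bar>, i)" using g gcls_eq by blast
      moreover have "k mod \<bar>d\<bar> \<in> {0..<\<bar>d\<bar>}" using d0 by simp
      ultimately show "g \<in> (\<lambda>k. gcls N A B (k, i)) ` {0..<\<bar>d\<bar>}" by blast
    qed
    then have "finite (isotropy N A B i)" using finite_subset by blast
    then show False using inf by (simp add: V_inf_def)
  qed
next
  assume h: "\<forall>d. Div i d \<longrightarrow> d = 0"
  have "inj (\<lambda>k. gcls N A B (k, i))"
  proof (rule injI)
    fix k l assume "gcls N A B (k, i) = gcls N A B (l, i)"
    then have "Div i (k - l)" using gcls_eq by blast
    then have "k - l = 0" using h by blast
    then show "k = l" by simp
  qed
  then have "infinite (isotropy N A B i)" unfolding isotropy_range
    using finite_imageD infinite_UNIV_int by blast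
  then show "i \<in> V_inf N A B" using i by (simp add: V_inf_def)
qed

lemma V_fin_iff: "i \<in> V_fin N A B \<longleftrightarrow> i \<in> {1..N} \<and> (\<exists>d. d \<noteq> 0 \<and> Div i d)"
  using V_inf_iff by (auto simp: V_fin_def)

lemma V_inf_sub: "V_inf N A B \<subseteq> {1..N}"
  by (auto simp: V_inf_def)

lemma Div_step: "Div (edge_r e) d \<Longrightarrow> is_edge N A e \<Longrightarrow> B (edge_r e) (edge_s e) \<noteq> 0 \<Longrightarrow> Div (edge_s e) d"
  unfolding Div_def
proof (intro allI impI)
  fix \<nu> assume h: "\<forall>\<nu>. Bpath (edge_r e) \<nu> \<longrightarrow> int (A_path A \<nu>) dvd d" and ie: "is_edge N A e"
    and bn: "B (edge_r e) (edge_s e) \<noteq> 0" and b: "Bpath (edge_s e) \<nu>"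
  have "Bpath (edge_r e) (e # \<nu>)" using ie bn b by (simp add: Bpath_Cons)
  then have "int (A_path A (e # \<nu>)) dvd d" using h by blast
  then show "int (A_path A \<nu>) dvd d" by (simp add: A_path_Cons) (metis dvd_mult_right)
qed

lemma is_edge_vs: "is_edge N A e \<Longrightarrow> edge_r e \<in> {1..N} \<and> edge_s e \<in> {1..N}"
  by (auto simp: is_edge_def edge_r_def edge_s_def split: prod.splits)

lemma V_fin_step: "edge_r e \<in> V_fin N A B \<Longrightarrow> is_edge N A e \<Longrightarrow> B (edge_r e) (edge_s e) \<noteq> 0 \<Longrightarrow> edge_s e \<in> V_fin N A B"
  using Div_step is_edge_vs V_fin_iff by metis

lemma Bpath_fin: "Bpath i \<mu> \<Longrightarrow> i \<in> V_fin N A B \<Longrightarrow> set \<mu> \<subseteq> edges_fin N A B \<and> path_src i \<mu> \<in> V_fin N A B"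
proof (induction \<mu> arbitrary: i)
  case Nil then show ?case by (simp add: path_src_def)
next
  case (Cons e \<mu>)
  then have ie: "is_edge N A e" and r: "edge_r e = i" and bn: "B (edge_r e) (edge_s e) \<noteq> 0" and bm: "Bpath (edge_s e) \<mu>"
    by (auto simp: Bpath_Cons)
  have sf: "edge_s e \<in> V_fin N A B" using V_fin_step ie bn r Cons.prems(2) by blast
  have "e \<in> edges_fin N A B" using ie r bn Cons.prems(2) by (simp add: edges_fin_def)
  then show ?case using Cons.IH[OF bm sf] by (simp add: path_src_Cons)
qed

lemma Bpath_inf: "Bpath i \<mu> \<Longrightarrow> path_src i \<mu> \<in> V_inf N A B \<Longrightarrow> subgraph_path N A (V_inf N A B) (edges_inf N A B) i \<mu>"
proof (induction \<mu> arbitrary: i)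
  case Nil then show ?case by (simp add: path_src_def subgraph_path_def Bpath_def)
next
  case (Cons e \<mu>)
  then have ie: "is_edge N A e" and r: "edge_r e = i" and bn: "B (edge_r e) (edge_s e) \<noteq> 0" and bm: "Bpath (edge_s e) \<mu>"
    by (auto simp: Bpath_Cons)
  have ih: "subgraph_path N A (V_inf N A B) (edges_inf N A B) (edge_s e) \<mu>"
    using Cons.IH[OF bm] Cons.prems(2) by (simp add: path_src_Cons)
  then have si: "edge_s e \<in> V_inf N A B" by (simp add: subgraph_path_def)
  have ri: "i \<in> V_inf N A B"
  proof (rule ccontr)
    assume "i \<notin> V_inf N A B"
    then have "i \<in> V_fin N A B" using is_edge_vs[OF ie] r by (simp add: V_fin_def)
    then have "edge_s e \<in> V_fin N A B" using V_fin_step ie bn r by blast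
    then show False using si by (simp add: V_fin_def)
  qed
  have "e \<in> edges_inf N A B" using ie si bn by (simp add: edges_inf_def)
  then show ?case using ih ri ie r by (auto simp: subgraph_path_def)
qed

lemma subgraph_Bpath_inf: "subgraph_path N A (V_inf N A B) (edges_inf N A B) i \<mu> \<Longrightarrow> Bpath i \<mu>"
  by (auto simp: subgraph_path_def Bpath_def edges_inf_def)

lemma subgraph_Bpath_fin: "subgraph_path N A (V_fin N A B) (edges_fin N A B) i \<mu> \<Longrightarrow> Bpath i \<mu>"
  by (auto simp: subgraph_path_def Bpath_def edges_fin_def)

lemma inf_src: "subgraph_path N A (V_inf N A B) (edges_inf N A B) i \<mu> \<Longrightarrow> path_src i \<mu> \<in> V_inf N A B"
proof (cases "\<mu> = []")
  case False
  assume h: "subgraph_path N A (V_inf N A B) (edges_inf N A B) i \<mu>"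
  then have "last \<mu> \<in> edges_inf N A B" using False by (auto simp: subgraph_path_def)
  then show ?thesis using False by (simp add: path_src_def edges_inf_def)
qed (auto simp: subgraph_path_def path_src_def)

lemma inf_split: "subgraph_path N A (V_inf N A B) (edges_inf N A B) i (xs @ ys) \<Longrightarrow>
   subgraph_path N A (V_inf N A B) (edges_inf N A B) i xs \<and>
   subgraph_path N A (V_inf N A B) (edges_inf N A B) (path_src i xs) ys"
proof -
  assume h: "subgraph_path N A (V_inf N A B) (edges_inf N A B) i (xs @ ys)"
  then have a: "subgraph_path N A (V_inf N A B) (edges_inf N A B) i xs"
    by (auto simp: subgraph_path_def valid_append)
  then show ?thesis using h inf_src[OF a] by (auto simp: subgraph_path_def valid_append)
qed

lemma reg_use:
  assumes v: "v \<in> {1..N}"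
    and Q: "\<forall>\<mu>. valid_path N A (gdom (gcls N A B (c, v))) \<mu> \<and> gact A B (gcls N A B (c, v)) \<mu> = \<mu> \<and> length \<mu> \<ge> K'
        \<longrightarrow> gres N A B (gcls N A B (c, v)) \<mu> = gunit N A B (path_src (gdom (gcls N A B (c, v))) \<mu>)"
    and b: "Bpath v \<alpha>" and dv: "int (A_path A \<alpha>) dvd c" and len: "length \<alpha> \<ge> K'"
  shows "Div (path_src v \<alpha>) (c div int (A_path A \<alpha>))"
proof -
  let ?g = "gcls N A B (c, v)"
  have va: "valid_path N A v \<alpha>" using b by (simp add: Bpath_def)
  have gd: "gdom ?g = v" using gcls_props(2)[OF v] .
  have "int (A_path A (Bpref \<alpha>)) dvd c - 0" using dv Bpref_of_Bpath[OF b] by simp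
  then have "path_act A B (c, v) \<alpha> = path_act A B (0, v) \<alpha>" using act_eq[OF va] by blast
  then have "gact A B ?g \<alpha> = \<alpha>" using gcls_props(3)[OF v va] act_zero[OF va] by simp
  then have "gres N A B ?g \<alpha> = gunit N A B (path_src v \<alpha>)" using Q va len gd by simp
  moreover have "gres N A B ?g \<alpha> = gcls N A B (c div int (A_path A \<alpha>), path_src v \<alpha>)"
    using gcls_props(4)[OF v va] res_dvd[OF b dv] by simp
  ultimately have "gcls N A B (c div int (A_path A \<alpha>), path_src v \<alpha>) = gcls N A B (0, path_src v \<alpha>)"
    by (simp add: gunit_def)
  then show ?thesis using gcls_eq by fastforce
qed

lemma finite_V_inf: "finite (V_inf N A B)"
  using V_inf_sub finite_subset by blast

lemma regular_cond:
  assumes reg: "regular N A B"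
  shows "\<exists>K::nat.
          (\<forall>i \<mu>. subgraph_path N A (V_inf N A B) (edges_inf N A B) i \<mu> \<and> A_path A \<mu> = 1
              \<longrightarrow> length \<mu> \<le> K)
        \<and> (\<forall>i \<mu>. subgraph_path N A (V_fin N A B) (edges_fin N A B) i \<mu> \<and> length \<mu> \<ge> K
              \<longrightarrow> A_path A (path_seg \<mu> K (length \<mu>)) = 1)"
proof -
  let ?X = "(\<lambda>v. gcls N A B (1, v)) ` V_inf N A B \<union> \<Union> (isotropy N A B ` V_fin N A B)"
  have finX: "finite ?X"
  proof -
    have "finite (V_fin N A B)" by (simp add: V_fin_def)
    moreover have "\<forall>v\<in>V_fin N A B. finite (isotropy N A B v)" by (auto simp: V_fin_def V_inf_def)
    ultimately show ?thesis using finite_V_inf by blast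
  qed
  have XG: "?X \<subseteq> G_B N A B"
  proof
    fix g assume "g \<in> ?X"
    then show "g \<in> G_B N A B"
    proof
      assume "g \<in> (\<lambda>v. gcls N A B (1, v)) ` V_inf N A B"
      then show ?thesis using gcls_props(1) V_inf_sub by blast
    next
      assume "g \<in> \<Union> (isotropy N A B ` V_fin N A B)"
      then obtain v k where "v \<in> V_fin N A B" "g = gcls N A B (k, v)" by (auto simp: isotropy_def)
      then show ?thesis using gcls_props(1) by (auto simp: V_fin_def)
    qed
  qed
  let ?Q = "\<lambda>g K. \<forall>\<mu>. valid_path N A (gdom g) \<mu> \<and> gact A B g \<mu> = \<mu> \<and> length \<mu> \<ge> K
        \<longrightarrow> gres N A B g \<mu> = gunit N A B (path_src (gdom g) \<mu>)"
  have "\<forall>g\<in>?X. \<exists>K. ?Q g K" using reg XG unfolding regular_def by blast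
  then obtain f where f: "\<forall>g\<in>?X. ?Q g (f g)" by metis
  define K0 where "K0 = sum f ?X"
  have fle: "\<And>g. g \<in> ?X \<Longrightarrow> f g \<le> K0" unfolding K0_def using finX by (intro member_le_sum) auto
  show ?thesis
  proof (rule exI[of _ "K0 + 1"], intro conjI allI impI)
    fix i \<mu> assume h: "subgraph_path N A (V_inf N A B) (edges_inf N A B) i \<mu> \<and> A_path A \<mu> = 1"
    show "length \<mu> \<le> K0 + 1"
    proof (rule ccontr)
      assume "\<not> length \<mu> \<le> K0 + 1"
      then have len: "length \<mu> \<ge> K0" by simp
      have iv: "i \<in> V_inf N A B" using h by (simp add: subgraph_path_def)
      then have i1: "i \<in> {1..N}" using V_inf_sub by blast
      have gX: "gcls N A B (1, i) \<in> ?X" using iv by blast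
      have b: "Bpath i \<mu>" using h subgraph_Bpath_inf by blast
      have "Div (path_src i \<mu>) (1 div int (A_path A \<mu>))"
        using reg_use[OF i1 _ b, of 1 "f (gcls N A B (1, i))"] f gX fle[OF gX] len h by auto
      then have "Div (path_src i \<mu>) 1" using h by simp
      moreover have "path_src i \<mu> \<in> V_inf N A B" using h inf_src by blast
      ultimately show False using V_inf_iff V_inf_sub by fastforce
    qed
  next
    fix i \<mu> assume h: "subgraph_path N A (V_fin N A B) (edges_fin N A B) i \<mu> \<and> K0 + 1 \<le> length \<mu>"
    have seg: "path_seg \<mu> (K0 + 1) (length \<mu>) = drop K0 \<mu>" using h by (simp add: path_seg_def)
    have b: "Bpath i \<mu>" using h subgraph_Bpath_fin by blast
    have ifin: "i \<in> V_fin N A B" using h by (simp add: subgraph_path_def)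
    then have i1: "i \<in> {1..N}" by (simp add: V_fin_def)
    obtain d where d0: "d \<noteq> 0" and dd: "Div i d" using ifin V_fin_iff by blast
    have "\<forall>e\<in>set (drop K0 \<mu>). A (edge_r e) (edge_s e) = 1"
    proof (rule ccontr)
      assume "\<not> (\<forall>e\<in>set (drop K0 \<mu>). A (edge_r e) (edge_s e) = 1)"
      then obtain e where es: "e \<in> set (drop K0 \<mu>)" and ne: "A (edge_r e) (edge_s e) \<noteq> 1" by blast
      obtain ys zs where dz: "drop K0 \<mu> = ys @ e # zs" using split_list[OF es] by blast
      define \<alpha> where "\<alpha> = take K0 \<mu> @ ys"
      have mu: "\<mu> = \<alpha> @ e # zs" using dz unfolding \<alpha>_def by (metis append.assoc append_take_drop_id)
      have la: "length \<alpha> \<ge> K0" using h unfolding \<alpha>_def by simp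
      have ba: "Bpath i \<alpha>" and be: "Bpath (path_src i \<alpha>) (e # zs)" using b mu Bpath_append by auto
      have adv: "int (A_path A \<alpha>) dvd d" using dd ba Div_def by blast
      let ?c = "int (A_path A \<alpha>)"
      have cpos: "?c \<ge> 1" using A_path_pos ba by (simp add: Bpath_def) (metis of_nat_1 of_nat_mono)
      have gX: "gcls N A B (?c, i) \<in> ?X" using ifin by (auto simp: isotropy_def)
      have "Div (path_src i \<alpha>) (?c div ?c)"
        using reg_use[OF i1 _ ba dvd_refl, of "f (gcls N A B (?c, i))"] f gX fle[OF gX] la by auto
      then have D1: "Div (path_src i \<alpha>) 1" using cpos by simp
      have ie: "is_edge N A e" and bs: "Bpath (edge_s e) []" and rr: "edge_r e = path_src i \<alpha>"
        and bn: "B (edge_r e) (edge_s e) \<noteq> 0"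
        using be by (auto simp: Bpath_Cons Bpath_def dest: valid_vertex)
      have "Bpath (path_src i \<alpha>) [e]" using ie bs rr bn by (simp add: Bpath_Cons)
      then have "int (A_path A [e]) dvd 1" using D1 Div_def by blast
      then have "A (edge_r e) (edge_s e) = 1" by (simp add: A_path_def)
      then show False using ne by simp
    qed
    then show "A_path A (path_seg \<mu> (K0 + 1) (length \<mu>)) = 1" using seg A_path_eq1 by simp
  qed
qed

lemma inf_growth:
  assumes c1: "\<forall>i \<mu>. subgraph_path N A (V_inf N A B) (edges_inf N A B) i \<mu> \<and> A_path A \<mu> = 1 \<longrightarrow> length \<mu> \<le> K"
  shows "subgraph_path N A (V_inf N A B) (edges_inf N A B) i \<pi> \<Longrightarrow> length \<pi> \<ge> (K + 1) * t \<Longrightarrow> A_path A \<pi> \<ge> 2 ^ t"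
proof (induction t arbitrary: i \<pi>)
  case 0
  then show ?case using A_path_pos by (auto simp: subgraph_path_def)
next
  case (Suc t)
  let ?p1 = "take (K + 1) \<pi>" and ?p2 = "drop (K + 1) \<pi>"
  have sp: "subgraph_path N A (V_inf N A B) (edges_inf N A B) i ?p1"
    "subgraph_path N A (V_inf N A B) (edges_inf N A B) (path_src i ?p1) ?p2"
    using inf_split[of i ?p1 ?p2] Suc.prems(1) by simp_all
  have l1: "length ?p1 = K + 1" using Suc.prems(2) by simp
  then have "A_path A ?p1 \<noteq> 1" using c1 sp(1) by fastforce
  moreover have "A_path A ?p1 \<ge> 1" using A_path_pos sp(1) by (auto simp: subgraph_path_def)
  ultimately have a1: "A_path A ?p1 \<ge> 2" by simp
  have "length ?p2 \<ge> (K + 1) * t" using Suc.prems(2) by simp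
  then have a2: "A_path A ?p2 \<ge> 2 ^ t" using Suc.IH[OF sp(2)] by simp
  have "A_path A \<pi> = A_path A ?p1 * A_path A ?p2" by (metis A_path_append append_take_drop_id)
  also have "\<dots> \<ge> 2 * 2 ^ t" using a1 a2 by (simp add: mult_le_mono)
  finally show ?case by simp
qed

lemma inf_short:
  assumes c1: "\<forall>i \<mu>. subgraph_path N A (V_inf N A B) (edges_inf N A B) i \<mu> \<and> A_path A \<mu> = 1 \<longrightarrow> length \<mu> \<le> K"
    and sp: "subgraph_path N A (V_inf N A B) (edges_inf N A B) i \<pi>"
    and dv: "int (A_path A \<pi>) dvd k" and k0: "k \<noteq> 0"
  shows "length \<pi> < (K + 1) * nat \<bar>k\<bar>"
proof (rule ccontr)
  assume "\<not> length \<pi> < (K + 1) * nat \<bar>k\<bar>"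
  then have "A_path A \<pi> \<ge> 2 ^ nat \<bar>k\<bar>" using inf_growth[OF c1 sp] by simp
  moreover have "nat \<bar>k\<bar> < 2 ^ nat \<bar>k\<bar>" by (rule less_exp)
  moreover have "int (A_path A \<pi>) \<le> \<bar>k\<bar>" using dvd_imp_le_int[OF k0 dv] by simp
  ultimately show False by linarith
qed

lemma fin_tail:
  assumes c2: "\<forall>i \<mu>. subgraph_path N A (V_fin N A B) (edges_fin N A B) i \<mu> \<and> length \<mu> \<ge> K
              \<longrightarrow> A_path A (path_seg \<mu> K (length \<mu>)) = 1"
    and j: "j \<in> V_fin N A B" and b: "Bpath j (\<alpha> @ \<nu>)" and la: "length \<alpha> \<ge> K"
  shows "A_path A \<nu> = 1"
proof -
  let ?w = "\<alpha> @ \<nu>"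
  have "set ?w \<subseteq> edges_fin N A B" using Bpath_fin[OF b j] by simp
  then have "subgraph_path N A (V_fin N A B) (edges_fin N A B) j ?w" using b j by (simp add: subgraph_path_def Bpath_def)
  moreover have "length ?w \<ge> K" using la by simp
  ultimately have "A_path A (path_seg ?w K (length ?w)) = 1" using c2 by blast
  moreover have "path_seg ?w K (length ?w) = drop (K - 1) ?w" by (simp add: path_seg_def)
  ultimately have "\<forall>e\<in>set (drop (K - 1) ?w). A (edge_r e) (edge_s e) = 1" using A_path_eq1 by simp
  moreover have "set \<nu> \<subseteq> set (drop (K - 1) ?w)"
  proof -
    have "\<nu> = drop (length \<alpha>) ?w" by simp
    then show ?thesis using set_drop_subset_set_drop[of "K - 1" "length \<alpha>" ?w] la by simp
  qed
  ultimately show ?thesis using A_path_eq1 by blast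
qed

lemma cond_regular:
  assumes c1: "\<forall>i \<mu>. subgraph_path N A (V_inf N A B) (edges_inf N A B) i \<mu> \<and> A_path A \<mu> = 1 \<longrightarrow> length \<mu> \<le> K"
    and c2: "\<forall>i \<mu>. subgraph_path N A (V_fin N A B) (edges_fin N A B) i \<mu> \<and> length \<mu> \<ge> K
              \<longrightarrow> A_path A (path_seg \<mu> K (length \<mu>)) = 1"
  shows "regular N A B"
  unfolding regular_def
proof
  fix g assume "g \<in> G_B N A B"
  then obtain k i where i1: "i \<in> {1..N}" and g: "g = gcls N A B (k, i)" by (rule G_B_cases)
  show "\<exists>K'. \<forall>\<mu>. valid_path N A (gdom g) \<mu> \<and> gact A B g \<mu> = \<mu> \<and> length \<mu> \<ge> K'
        \<longrightarrow> gres N A B g \<mu> = gunit N A B (path_src (gdom g) \<mu>)"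
  proof (rule exI[of _ "(K + 1) * nat \<bar>k\<bar> + K + 1"], intro allI impI)
    fix \<mu> assume h: "valid_path N A (gdom g) \<mu> \<and> gact A B g \<mu> = \<mu> \<and> length \<mu> \<ge> (K + 1) * nat \<bar>k\<bar> + K + 1"
    have gd: "gdom g = i" using gcls_props(2)[OF i1] g by simp
    have v: "valid_path N A i \<mu>" using h gd by simp
    let ?s = "path_src i \<mu>"
    let ?r = "fst (path_res A B (k, i) \<mu>)"
    have gr: "gres N A B g \<mu> = gcls N A B (?r, ?s)" using gcls_props(4)[OF i1 v] g by simp
    have "path_act A B (k, i) \<mu> = path_act A B (0, i) \<mu>" using h gcls_props(3)[OF i1 v] g act_zero[OF v] by simp
    then have dvB: "int (A_path A (Bpref \<mu>)) dvd k" using act_eq[OF v] by simp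
    have "Div ?s ?r"
    proof (cases "Bpref \<mu> = \<mu>")
      case False
      then show ?thesis using res_nonB[OF v False] by simp
    next
      case True
      then have b: "Bpath i \<mu>" using Bpref_Bpath[OF v] by simp
      have dv: "int (A_path A \<mu>) dvd k" using dvB True by simp
      show ?thesis
      proof (cases "k = 0")
        case True
        then show ?thesis using res_dvd[OF b dv] by simp
      next
        case k0: False
        have "\<forall>\<nu>. Bpath ?s \<nu> \<longrightarrow> A_path A \<nu> = 1"
        proof (intro allI impI)
          fix \<nu> assume bn: "Bpath ?s \<nu>"
          have bw: "Bpath i (\<mu> @ \<nu>)" using b bn Bpath_append by simp
          show "A_path A \<nu> = 1"
          proof (cases "i \<in> V_inf N A B")
            case False
            then have "i \<in> V_fin N A B" using i1 by (simp add: V_fin_def)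
            then show ?thesis using fin_tail[OF c2 _ bw] h by simp
          next
            case True
            let ?P = "\<lambda>e. edge_s e \<in> V_inf N A B"
            let ?m1 = "takeWhile ?P \<mu>" and ?m2 = "dropWhile ?P \<mu>"
            have mu: "\<mu> = ?m1 @ ?m2" by simp
            have "Bpath i (?m1 @ ?m2)" using b by simp
            then have bm1: "Bpath i ?m1" and bm2: "Bpath (path_src i ?m1) ?m2" by (simp_all only: Bpath_append)
            have "set ?m1 \<subseteq> edges_inf N A B"
            proof
              fix e assume "e \<in> set ?m1"
              then have em: "e \<in> set \<mu>" and pe: "?P e" by (auto dest: set_takeWhileD)
              have "is_edge N A e" using valid_edge[OF v em] .
              moreover have "B (edge_r e) (edge_s e) \<noteq> 0" using b em by (simp add: Bpath_def)
              ultimately show "e \<in> edges_inf N A B" using pe by (simp add: edges_inf_def)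
            qed
            then have "subgraph_path N A (V_inf N A B) (edges_inf N A B) i ?m1"
              using bm1 True unfolding subgraph_path_def Bpath_def by simp
            moreover have "int (A_path A ?m1) dvd k"
            proof -
              have "A_path A \<mu> = A_path A ?m1 * A_path A ?m2" using A_path_append[of ?m1 ?m2] by simp
              then have "int (A_path A \<mu>) = int (A_path A ?m1) * int (A_path A ?m2)" by simp
              then show ?thesis using dv by (metis dvd_mult_left)
            qed
            ultimately have l1: "length ?m1 < (K + 1) * nat \<bar>k\<bar>" using inf_short[OF c1 _ _ k0] by blast
            have "?m2 \<noteq> []"
            proof
              assume "?m2 = []"
              then have "length \<mu> = length ?m1" using length_append[of ?m1 ?m2] by simp
              then show False using l1 h by simp
            qed
            then obtain e m3 where m2: "?m2 = e # m3" by (cases ?m2) auto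
            have ne: "\<not> ?P e" using m2 hd_dropWhile[of ?P \<mu>] by (metis list.sel(1) list.simps(3))
            have mu2: "\<mu> @ \<nu> = ?m1 @ e # (m3 @ \<nu>)" using mu m2 by simp
            have "Bpath i (?m1 @ e # (m3 @ \<nu>))" using bw by (simp only: mu2)
            then have "Bpath (path_src i ?m1) (e # (m3 @ \<nu>))" by (simp only: Bpath_append)
            then have ie: "is_edge N A e" and bw3: "Bpath (edge_s e) (m3 @ \<nu>)" by (simp_all add: Bpath_Cons)
            have ef: "edge_s e \<in> V_fin N A B" using ne is_edge_vs[OF ie] by (simp add: V_fin_def)
            have "length \<mu> = length ?m1 + length ?m2" using length_append[of ?m1 ?m2] by simp
            then have "length \<mu> = length ?m1 + 1 + length m3" using m2 by simp
            then have "length m3 \<ge> K" using l1 h by linarith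
            then show ?thesis using fin_tail[OF c2 ef bw3] by simp
          qed
        qed
        then show ?thesis unfolding Div_def by simp
      qed
    qed
    then have "gcls N A B (?r, ?s) = gcls N A B (0, ?s)" using gcls_eq by simp
    then show "gres N A B g \<mu> = gunit N A B (path_src (gdom g) \<mu>)" using gr gd by (simp add: gunit_def)
  qed
qed

lemma div_step_bounds:
  fixes k m a :: int
  assumes a1: "a \<ge> 1" and m0: "0 \<le> m" and ma: "m < a"
  shows "\<bar>(k + m) div a\<bar> \<le> \<bar>k\<bar>" and "a \<ge> 2 \<Longrightarrow> \<bar>(k + m) div a\<bar> \<le> max 1 (\<bar>k\<bar> - 1)"
proof -
  let ?q = "(k + m) div a"
  have lo: "a * ?q \<le> k + m"
  proof -
    have "k + m = a * ?q + (k + m) mod a" by simp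
    moreover have "(k + m) mod a \<ge> 0" using a1 by simp
    ultimately show ?thesis by linarith
  qed
  have hi: "k + m < a * ?q + a"
  proof -
    have "k + m = a * ?q + (k + m) mod a" by simp
    moreover have "(k + m) mod a < a" using a1 by simp
    ultimately show ?thesis by linarith
  qed
  have r1: "\<bar>?q\<bar> \<le> \<bar>k\<bar> \<and> (a \<ge> 2 \<longrightarrow> \<bar>?q\<bar> \<le> max 1 (\<bar>k\<bar> - 1))"
  proof (cases "k \<ge> 0")
    case True
    have q0: "?q \<ge> 0" using True m0 a1 by (simp add: pos_imp_zdiv_nonneg_iff)
    have qk: "?q \<le> k"
    proof (rule ccontr)
      assume "\<not> ?q \<le> k"
      then have "?q \<ge> k + 1" by simp
      then have "a * ?q \<ge> a * (k + 1)" using a1 by (simp add: mult_left_mono)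
      moreover have "a * k \<ge> k" using mult_right_mono[of 1 a k] a1 True by simp
      ultimately show False using lo ma by (simp add: algebra_simps)
    qed
    have "a \<ge> 2 \<longrightarrow> ?q \<le> max 1 (k - 1)"
    proof
      assume a2: "a \<ge> 2"
      show "?q \<le> max 1 (k - 1)"
      proof (cases "k \<ge> 2")
        case k2: True
        have "?q \<le> k - 1"
        proof (rule ccontr)
          assume "\<not> ?q \<le> k - 1"
          then have "?q \<ge> k" by simp
          then have "a * ?q \<ge> a * k" using a1 by (simp add: mult_left_mono)
          moreover have "(a - 1) * (k - 1) \<ge> 1 * 1" using mult_mono[of 1 "a - 1" 1 "k - 1"] a2 k2 by simp
          ultimately show False using lo ma by (simp add: algebra_simps)
        qed
        then show ?thesis by simp
      next
        case False then show ?thesis using qk by simp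
      qed
    qed
    then show ?thesis using q0 qk True by simp
  next
    case False
    have q0: "?q \<le> 0"
    proof (rule ccontr)
      assume "\<not> ?q \<le> 0"
      then have "?q \<ge> 1" by simp
      then have "a * ?q \<ge> a * 1" using mult_left_mono[of 1 ?q a] a1 by simp
      then show False using lo ma False by simp
    qed
    have qk: "?q \<ge> k"
    proof (rule ccontr)
      assume "\<not> ?q \<ge> k"
      then have "?q + 1 \<le> k" by simp
      then have "a * (?q + 1) \<le> a * k" using a1 by (simp add: mult_left_mono)
      moreover have "a * k \<le> 1 * k" using mult_right_mono_neg[of 1 a k] a1 False by simp
      ultimately show False using hi m0 by (simp add: algebra_simps)
    qed
    have "a \<ge> 2 \<longrightarrow> - ?q \<le> max 1 (- k - 1)"
    proof
      assume a2: "a \<ge> 2"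
      show "- ?q \<le> max 1 (- k - 1)"
      proof (cases "k \<le> -2")
        case k2: True
        have "?q \<ge> k + 1"
        proof (rule ccontr)
          assume "\<not> ?q \<ge> k + 1"
          then have "?q + 1 \<le> k + 1" by simp
          then have "a * (?q + 1) \<le> a * (k + 1)" using a1 by (simp add: mult_left_mono)
          moreover have "a * (k + 1) \<le> 2 * (k + 1)" using mult_right_mono_neg[of 2 a "k + 1"] a2 k2 by simp
          ultimately show False using hi m0 k2 by (simp add: algebra_simps)
        qed
        then show ?thesis by simp
      next
        case k2: False then show ?thesis using qk by simp
      qed
    qed
    then show ?thesis using q0 qk False by simp
  qed
  show "\<bar>?q\<bar> \<le> \<bar>k\<bar>" using r1 by simp
  show "a \<ge> 2 \<Longrightarrow> \<bar>?q\<bar> \<le> max 1 (\<bar>k\<bar> - 1)" using r1 by simp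
qed

lemma edge_res_bound:
  assumes ie: "is_edge N A e"
  shows "\<bar>fst (edge_res A B (k, x) e)\<bar> \<le> \<bar>k\<bar>"
    and "A (edge_r e) (edge_s e) \<ge> 2 \<Longrightarrow> \<bar>fst (edge_res A B (k, x) e)\<bar> \<le> max 1 (\<bar>k\<bar> - 1)"
proof -
  obtain i j m where e: "e = (i, j, m)" by (cases e) auto
  have mA: "m < A i j" and ij: "i \<in> {1..N}" "j \<in> {1..N}" using ie e by (auto simp: is_edge_def)
  have "B i j \<in> {0, 1}" using b01 ij by blast
  then have "B i j = 0 \<or> B i j = 1" by simp
  then have r: "\<bar>fst (edge_res A B (k, x) e)\<bar> \<le> \<bar>k\<bar> \<and>
    (A (edge_r e) (edge_s e) \<ge> 2 \<longrightarrow> \<bar>fst (edge_res A B (k, x) e)\<bar> \<le> max 1 (\<bar>k\<bar> - 1))"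
  proof
    assume "B i j = 0"
    then have "fst (edge_res A B (k, x) e) = 0" using e mA by (simp add: edge_res_def)
    then show ?thesis by (simp add: le_max_iff_disj)
  next
    assume b1: "B i j = 1"
    have fe: "fst (edge_res A B (k, x) e) = (k + int m) div int (A i j)" using e b1 by (simp add: edge_res_def)
    have a1: "int (A i j) \<ge> 1" using mA by simp
    have m0: "0 \<le> int m" and ma: "int m < int (A i j)" using mA by simp_all
    show ?thesis using div_step_bounds[OF a1 m0 ma, of k] fe e by (simp add: edge_r_def edge_s_def)
  qed
  show "\<bar>fst (edge_res A B (k, x) e)\<bar> \<le> \<bar>k\<bar>" using r by simp
  show "A (edge_r e) (edge_s e) \<ge> 2 \<Longrightarrow> \<bar>fst (edge_res A B (k, x) e)\<bar> \<le> max 1 (\<bar>k\<bar> - 1)" using r by simp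
qed

lemma edge_res_pair: "edge_res A B a e = (fst (edge_res A B a e), snd (edge_res A B a e))"
  by simp

lemma path_res_bound: "valid_path N A i \<mu> \<Longrightarrow> \<bar>fst (path_res A B (k, x) \<mu>)\<bar> \<le> \<bar>k\<bar>"
proof (induction \<mu> arbitrary: i k x)
  case Nil then show ?case by simp
next
  case (Cons e \<mu>)
  then have ie: "is_edge N A e" and vm: "valid_path N A (edge_s e) \<mu>" by auto
  obtain k1 x1 where er: "edge_res A B (k, x) e = (k1, x1)" by (cases "edge_res A B (k, x) e") auto
  have "\<bar>k1\<bar> \<le> \<bar>k\<bar>" using edge_res_bound(1)[OF ie, of k x] er by simp
  moreover have "\<bar>fst (path_res A B (k1, x1) \<mu>)\<bar> \<le> \<bar>k1\<bar>" using Cons.IH[OF vm] .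
  ultimately show ?case using er by simp
qed

lemma path_res_bound2: "valid_path N A i \<mu> \<Longrightarrow> e0 \<in> set \<mu> \<Longrightarrow> A (edge_r e0) (edge_s e0) \<ge> 2 \<Longrightarrow>
   \<bar>fst (path_res A B (k, x) \<mu>)\<bar> \<le> max 1 (\<bar>k\<bar> - 1)"
proof (induction \<mu> arbitrary: i k x)
  case Nil then show ?case by simp
next
  case (Cons e \<mu>)
  then have ie: "is_edge N A e" and vm: "valid_path N A (edge_s e) \<mu>" by auto
  obtain k1 x1 where er: "edge_res A B (k, x) e = (k1, x1)" by (cases "edge_res A B (k, x) e") auto
  have k1: "\<bar>k1\<bar> \<le> \<bar>k\<bar>" using edge_res_bound(1)[OF ie, of k x] er by simp
  show ?case
  proof (cases "e0 = e")
    case True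
    then have "\<bar>k1\<bar> \<le> max 1 (\<bar>k\<bar> - 1)" using edge_res_bound(2)[OF ie, of k x] er Cons.prems(3) by simp
    moreover have "\<bar>fst (path_res A B (k1, x1) \<mu>)\<bar> \<le> \<bar>k1\<bar>" using path_res_bound[OF vm] .
    ultimately show ?thesis using er by simp
  next
    case False
    then have "e0 \<in> set \<mu>" using Cons.prems(2) by simp
    then have "\<bar>fst (path_res A B (k1, x1) \<mu>)\<bar> \<le> max 1 (\<bar>k1\<bar> - 1)" using Cons.IH[OF vm] Cons.prems(3) by blast
    then show ?thesis using er k1 by simp
  qed
qed

lemma path_res_append: "path_res A B a (xs @ ys) = path_res A B (path_res A B a xs) ys"
  by (induction xs arbitrary: a) auto

lemma inf_res_bound:
  assumes c1: "\<forall>i \<mu>. subgraph_path N A (V_inf N A B) (edges_inf N A B) i \<mu> \<and> A_path A \<mu> = 1 \<longrightarrow> length \<mu> \<le> K"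
  shows "subgraph_path N A (V_inf N A B) (edges_inf N A B) i \<pi> \<Longrightarrow> length \<pi> \<ge> (K + 1) * t \<Longrightarrow>
    \<bar>fst (path_res A B (k, x) \<pi>)\<bar> \<le> max 1 (\<bar>k\<bar> - int t)"
proof (induction t arbitrary: i \<pi> k x)
  case 0
  then have "valid_path N A i \<pi>" by (simp add: subgraph_path_def)
  then have "\<bar>fst (path_res A B (k, x) \<pi>)\<bar> \<le> \<bar>k\<bar>" by (rule path_res_bound)
  then show ?case by simp
next
  case (Suc t)
  let ?p1 = "take (K + 1) \<pi>" and ?p2 = "drop (K + 1) \<pi>"
  have sp: "subgraph_path N A (V_inf N A B) (edges_inf N A B) i ?p1"
    "subgraph_path N A (V_inf N A B) (edges_inf N A B) (path_src i ?p1) ?p2"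
    using inf_split[of i ?p1 ?p2] Suc.prems(1) by simp_all
  have v1: "valid_path N A i ?p1" using sp(1) by (simp add: subgraph_path_def)
  have l1: "length ?p1 = K + 1" using Suc.prems(2) by simp
  then have "A_path A ?p1 \<noteq> 1" using c1 sp(1) by fastforce
  then obtain e0 where e0: "e0 \<in> set ?p1" "A (edge_r e0) (edge_s e0) \<noteq> 1" using A_path_eq1 by blast
  have "A (edge_r e0) (edge_s e0) \<ge> 1" using is_edge_A valid_edge[OF v1 e0(1)] by blast
  then have e2: "A (edge_r e0) (edge_s e0) \<ge> 2" using e0(2) by simp
  obtain k1 x1 where r1: "path_res A B (k, x) ?p1 = (k1, x1)" by (cases "path_res A B (k, x) ?p1") auto
  have k1: "\<bar>k1\<bar> \<le> max 1 (\<bar>k\<bar> - 1)" using path_res_bound2[OF v1 e0(1) e2, of k x] r1 by simp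
  have "length ?p2 \<ge> (K + 1) * t" using Suc.prems(2) by simp
  then have "\<bar>fst (path_res A B (k1, x1) ?p2)\<bar> \<le> max 1 (\<bar>k1\<bar> - int t)" using Suc.IH[OF sp(2)] by blast
  moreover have "path_res A B (k, x) \<pi> = path_res A B (k1, x1) ?p2"
    using path_res_append[of "(k, x)" ?p1 ?p2] r1 by simp
  ultimately show ?case using k1 by simp
qed

lemma cond_contracting:
  assumes c1: "\<forall>i \<mu>. subgraph_path N A (V_inf N A B) (edges_inf N A B) i \<mu> \<and> A_path A \<mu> = 1 \<longrightarrow> length \<mu> \<le> K"
  shows "contracting N A B"
  unfolding contracting_def
proof (intro exI conjI)
  let ?F = "gcls N A B ` ({-1, 0, 1} \<times> {1..N}) \<union> \<Union> (isotropy N A B ` V_fin N A B)"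
  show "finite ?F"
  proof -
    have "finite (V_fin N A B)" by (simp add: V_fin_def)
    moreover have "\<forall>v\<in>V_fin N A B. finite (isotropy N A B v)" by (auto simp: V_fin_def V_inf_def)
    moreover have "finite ({-1, 0, 1::int} \<times> {1..N})" by simp
    ultimately show ?thesis by simp
  qed
  show "?F \<subseteq> G_B N A B"
  proof
    fix g assume "g \<in> ?F"
    then show "g \<in> G_B N A B"
    proof
      assume "g \<in> gcls N A B ` ({-1, 0, 1} \<times> {1..N})"
      then obtain k v where "v \<in> {1..N}" "g = gcls N A B (k, v)" by auto
      then show ?thesis using gcls_props(1) by simp
    next
      assume "g \<in> \<Union> (isotropy N A B ` V_fin N A B)"
      then obtain v k where "v \<in> V_fin N A B" "g = gcls N A B (k, v)" by (auto simp: isotropy_def)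
      then show ?thesis using gcls_props(1) by (auto simp: V_fin_def)
    qed
  qed
  show "\<forall>g\<in>G_B N A B. \<exists>n. \<forall>k\<ge>n. \<forall>\<mu>. valid_path N A (gdom g) \<mu> \<and> length \<mu> = k \<longrightarrow> gres N A B g \<mu> \<in> ?F"
  proof
    fix g assume "g \<in> G_B N A B"
    then obtain k i where i1: "i \<in> {1..N}" and g: "g = gcls N A B (k, i)" by (rule G_B_cases)
    show "\<exists>n. \<forall>k'\<ge>n. \<forall>\<mu>. valid_path N A (gdom g) \<mu> \<and> length \<mu> = k' \<longrightarrow> gres N A B g \<mu> \<in> ?F"
    proof (rule exI[of _ "(K + 1) * nat \<bar>k\<bar>"], intro allI impI)
      fix k' \<mu> assume kn: "(K + 1) * nat \<bar>k\<bar> \<le> k'" and h: "valid_path N A (gdom g) \<mu> \<and> length \<mu> = k'"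
      have gd: "gdom g = i" using gcls_props(2)[OF i1] g by simp
      have v: "valid_path N A i \<mu>" using h gd by simp
      let ?s = "path_src i \<mu>"
      let ?r = "fst (path_res A B (k, i) \<mu>)"
      have gr: "gres N A B g \<mu> = gcls N A B (?r, ?s)" using gcls_props(4)[OF i1 v] g by simp
      have s1: "?s \<in> {1..N}" using valid_src[OF v] .
      show "gres N A B g \<mu> \<in> ?F"
      proof (cases "?s \<in> V_fin N A B")
        case True
        have "gcls N A B (?r, ?s) \<in> isotropy N A B ?s" unfolding isotropy_def by blast
        then have "gcls N A B (?r, ?s) \<in> \<Union> (isotropy N A B ` V_fin N A B)" by (rule UN_I[OF True])
        then show ?thesis unfolding gr by (rule UnI2)
      next
        case False
        then have sinf: "?s \<in> V_inf N A B" using s1 by (simp add: V_fin_def)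
        have "?r \<in> {-1, 0, 1}"
        proof (cases "Bpref \<mu> = \<mu>")
          case False
          then show ?thesis using res_nonB[OF v False] by simp
        next
          case True
          then have b: "Bpath i \<mu>" using Bpref_Bpath[OF v] by simp
          have sp: "subgraph_path N A (V_inf N A B) (edges_inf N A B) i \<mu>" using Bpath_inf[OF b sinf] .
          have "length \<mu> \<ge> (K + 1) * nat \<bar>k\<bar>" using kn h by simp
          then have "\<bar>?r\<bar> \<le> max 1 (\<bar>k\<bar> - int (nat \<bar>k\<bar>))" by (rule inf_res_bound[OF c1 sp])
          then have "\<bar>?r\<bar> \<le> 1" by simp
          then have "?r = -1 \<or> ?r = 0 \<or> ?r = 1" by linarith
          then show ?thesis by simp
        qed
        then have "(?r, ?s) \<in> {-1, 0, 1} \<times> {1..N}" using s1 by simp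
        then have "gcls N A B (?r, ?s) \<in> gcls N A B ` ({-1, 0, 1} \<times> {1..N})" by (rule imageI)
        then show ?thesis unfolding gr by (rule UnI1)
      qed
    qed
  qed
qed

end

theorem corollary3p4:
  fixes N :: nat and A :: "nat \<Rightarrow> nat \<Rightarrow> nat" and B :: "nat \<Rightarrow> nat \<Rightarrow> int"
  assumes "katsura_pair N A B"
    and "\<forall>i\<in>{1..N}. \<forall>j\<in>{1..N}. B i j \<in> {0, 1}"
  shows "(regular N A B \<longrightarrow> contracting N A B)
    \<and> (regular N A B \<longleftrightarrow> (\<exists>K::nat.
          (\<forall>i \<mu>. subgraph_path N A (V_inf N A B) (edges_inf N A B) i \<mu> \<and> A_path A \<mu> = 1
              \<longrightarrow> length \<mu> \<le> K)
        \<and> (\<forall>i \<mu>. subgraph_path N A (V_fin N A B) (edges_fin N A B) i \<mu> \<and> length \<mu> \<ge> K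
              \<longrightarrow> A_path A (path_seg \<mu> K (length \<mu>)) = 1)))"
proof -
  interpret kat N A B using assms(2) by (unfold_locales)
  show ?thesis
  proof (intro conjI impI iffI)
    assume "regular N A B"
    then obtain K where "\<forall>i \<mu>. subgraph_path N A (V_inf N A B) (edges_inf N A B) i \<mu> \<and> A_path A \<mu> = 1
              \<longrightarrow> length \<mu> \<le> K" using regular_cond by blast
    then show "contracting N A B" by (rule cond_contracting)
  next
    assume "regular N A B"
    then show "\<exists>K::nat.
          (\<forall>i \<mu>. subgraph_path N A (V_inf N A B) (edges_inf N A B) i \<mu> \<and> A_path A \<mu> = 1
              \<longrightarrow> length \<mu> \<le> K)
        \<and> (\<forall>i \<mu>. subgraph_path N A (V_fin N A B) (edges_fin N A B) i \<mu> \<and> length \<mu> \<ge> K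
              \<longrightarrow> A_path A (path_seg \<mu> K (length \<mu>)) = 1)" by (rule regular_cond)
  next
    assume "\<exists>K::nat.
          (\<forall>i \<mu>. subgraph_path N A (V_inf N A B) (edges_inf N A B) i \<mu> \<and> A_path A \<mu> = 1
              \<longrightarrow> length \<mu> \<le> K)
        \<and> (\<forall>i \<mu>. subgraph_path N A (V_fin N A B) (edges_fin N A B) i \<mu> \<and> length \<mu> \<ge> K
              \<longrightarrow> A_path A (path_seg \<mu> K (length \<mu>)) = 1)"
    then show "regular N A B" using cond_regular by blast
  qed
qed

end
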